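(* Let $G$ be a 1-player timed region graph in which every region of $\mathcal R_{\mathrm{Min}}$ is choiceless. Let $\chi\in\Delta_{\mathrm{Max}}$ be regionally constant (so $G\upharpoonright\chi$ is 0-player) and let $(T^\chi,D^\chi)\models\mathrm{Opt}(G\upharpoonright\chi)$. If $\mathrm{Improve}_{\mathrm{Max}}(\chi,(T^\chi,D^\chi))=\chi$, then $(T^\chi,D^\chi)\models\mathrm{Opt}_{\mathrm{Max}}(G)$.
   Context: Fix $k\in\mathbb N$. Let $C$ be a finite set of clocks. A clock valuation is a function $\nu:C\to[0,k]$; $V$ is the set of clock valuations. For $t\ge 0$ let $(\nu+t)(c)=\nu(c)+t$; for $C'\subseteq C$ let $\mathrm{Reset}(\nu,C')(c)=0$ if $c\in C'$ and $=\nu(c)$ otherwise. Simple clock constraints are $c\bowtie i$ or $c-c'\bowtie i$ with $c,c'\in C$, $i\in\{0,\dots,k\}$, ${\bowtie}\in\{<,>,=,\le,\ge\}$. A clock region is an equivalence class of $V$ under "satisfies the same simple clock constraints"; a clock zone is a convex union of clock regions. For a finite set $L$ of locations, a configuration is $s=(\ell,\nu)\in Q=L\times V$; write $s(c)=\nu(c)$ and $s+t=(\ell,\nu+t)$ (defined if $\nu+t\in V$). A region is $(\ell,P)$ (identified with $\{(\ell,\nu):\nu\in P\}$) for a clock region $P$; $[s]$ is the region containing $s$, $\mathcal R$ the set of regions, $\overline R$ the topological closure of $R$. A zone is a set $\{(\ell,\nu):\nu\in W_\ell\}$ with each $W_\ell$ a clock zone. A timed automaton $\mathcal T=(L,C,S,A,E,\delta,\rho,F)$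 consists of finite $L$, finite $C$, a zone $S\subseteq Q$ of states, a finite set $A$ of actions, $E:A\to 2^S$ with every $E(a)$ a zone, $\delta:L\times A\to L$, $\rho:A\to 2^C$, and a zone $F\subseteq S$ of final states. For $s=(\ell,\nu)$: $s\to_t s'$ if $s'=s+t$ is defined and $s+t'\in S$ for all $t'\in[0,t]$; $s\xrightarrow{a}s'$ if $s'=(\delta(\ell,a),\mathrm{Reset}(\nu,\rho(a)))$, $s,s'\in S$ and $s\in E(a)$. For $(a,t)\in A\times\mathbb R_{\ge0}$, $\mathrm{Succ}(s,(a,t))=(\delta(\ell,a),\mathrm{Reset}(\nu+t,\rho(a)))$. A reachability-time game is $\Gamma=(\mathcal T,L_{\mathrm{Min}},L_{\mathrm{Max}})$ with $(L_{\mathrm{Min}},L_{\mathrm{Max}})$ a partition of $L$; $S_{\mathrm{Min}}$, $S_{\mathrm{Max}}$, $\mathcal R_{\mathrm{Min}}$, $\mathcal R_{\mathrm{Max}}$ are the states/regions with location in $L_{\mathrm{Min}}$ resp. $L_{\mathrm{Max}}$. Region relations: $R\to_*R'$ if there are $s\in R,s'\in R'$, $t\ge 0$ with $s\to_t s'$; $R\to_{+1}R'$ ($R'$ is the time successor of $R$) if $R\to_*R'$, $R\ne R'$, and $R\to_*R''\to_*R'$ implies $R''\in\{R,R'\}$; $R\xrightarrow aR'$ if there are $s\in R,s'\in R'$ with $s\xrightarrow a s'$. $R$ is thin if for all $s\in R$ and $\varepsilon>0$, $[s+\varepsilon]\neq[s]$. For thin $R''$, $b\in\{0,\dots,k\}$,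 $c\in C$: $R\to_{b,c}R''$ if $R\to_*R''$ and $s+(b-s(c))\in R''$ for all $s\in R$. Simple timed actions: $\mathcal A=A\times\{0,\dots,k\}\times C$; for $\alpha=(a,b,c)$, $t(s,\alpha)=b-s(c)$ if $s(c)\le b$ and $0$ otherwise, and $\mathrm{Succ}(s,\alpha)=\mathrm{Succ}(s,(a,t(s,\alpha)))$. For $F$ defined on $\overline{R'}$: $F^\oplus_\alpha(s)=t(s,\alpha)+F(\mathrm{Succ}(s,\alpha))$ and $F^\boxplus_\alpha(s)=1+F(\mathrm{Succ}(s,\alpha))$. Timed region graph $\widehat\Gamma=(\mathcal R,\mathcal M)$: $(R,\alpha,R')\in\mathcal M$ with $\alpha=(a,b,c)$ iff (i) $R\to_{b,c}R''\xrightarrow aR'$ for some $R''$; or (ii) $R\in\mathcal R_{\mathrm{Min}}$ and $R\to_{b,c}R''\to_{+1}R'''\xrightarrow aR'$ for some $R'',R'''$; or (iii) $R\in\mathcal R_{\mathrm{Max}}$ and $R\to_{b,c}R''$, $R'''\to_{+1}R''$, $R'''\xrightarrow aR'$ for some $R'',R'''$. (For $(R,\alpha,R')\in\mathcal M$ and $s\in R$, $\mathrm{Succ}(s,\alpha)\in\overline{R'}$.) Regional functions: maps $T$ assigning to each region $R$ a function $T(R):\overline R\to\mathbb R\cup\{\infty\}$ (resp. $D(R):\overline R\to\mathbb N\cup\{\infty\}$); $\widetilde T(s)=T([s])(s)$. $T$ is regionally simple (regionally constant) if each $T(R)$ is simple (constant), where $F:X\to\mathbb R$ is simple if $F\equiv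 e$ for some $e\in\mathbb Z$ or $F(s)=e-s(c)$ for some $e\in\mathbb Z$, $c\in C$. Lexicographic order: $(x,y)\le^{\mathrm{lex}}(x',y')$ iff $x<x'$, or $x=x'$ and $y\le y'$. Strategies and subgraphs: for a graph $G=(\mathcal R,\mathcal M')$, $\mathcal M'\subseteq\mathcal M$, a positional strategy for Max is a map $\chi:S_{\mathrm{Max}}\to\mathcal M'$ with $\chi(s)$ of the form $([s],\alpha,R)$; similarly $\mu:S_{\mathrm{Min}}\to\mathcal M'$ for Min; $\Delta_{\mathrm{Max}},\Delta_{\mathrm{Min}}$ are these sets. A strategy is regionally constant if $[s]=[s']$ implies equal values (write $\chi(R)$). For regionally constant $\chi$, the strategy subgraph $G\upharpoonright\chi$ keeps all moves of $G$ out of $\mathcal R_{\mathrm{Min}}$ and, out of each $R\in\mathcal R_{\mathrm{Max}}$, only $\chi(R)$; $G\upharpoonright\mu$ is analogous. A region is choiceless in $G$ if it has a unique outgoing move; $G$ is 0-player if all regions are choiceless, 1-player if all Min regions or all Max regions are choiceless. For $s\in S$ let $M^*(s,(T,D))$ (resp. $M_*(s,(T,D))$) be the set of moves $m=([s],\alpha,R')$ of $G$ at which $(T(R')^\oplus_\alpha(s),D(R')^\boxplus_\alpha(s))$ is lexicographically maximal (resp. minimal). Fix a function $\mathrm{Choose}$ selecting an element of each nonempty set of moves. $\mathrm{Improve}_{\mathrm{Max}}(\chi,(T,D))(s)=\chi(s)$ if $\chi(s)\in M^*(s,(T,D))$, and $=\mathrm{Choose}(M^*(s,(T,D)))$ otherwise.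 Optimality equations for a graph $G$: $(T,D)\models\mathrm{Opt}_{\mathrm{Max}}(G)$ (resp. $\mathrm{Opt}_{\mathrm{Min}}(G)$) iff $(\widetilde T(s),\widetilde D(s))=(0,0)$ for $s\in F$ and, for all $s\in S\setminus F$, $(\widetilde T(s),\widetilde D(s))=\max^{\mathrm{lex}}$ (resp. $\min^{\mathrm{lex}}$) of $\{(T(R')^\oplus_\alpha(s),D(R')^\boxplus_\alpha(s)):([s],\alpha,R')\text{ a move of }G\}$. If $G$ is 0-player these coincide and are written $\mathrm{Opt}(G)$. *)

theory Defs
  imports "HOL-Library.Extended_Real" "HOL-Library.Extended_Nat"
begin

text \<open>Clocks are the elements of a finite type 'c (so C = UNIV), locations the
elements of a finite type 'l (so L = UNIV), actions the elements of a finite type 'a.\<close>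

type_synonym ('l,'c) conf = "'l \<times> ('c \<Rightarrow> real)"

definition valuations :: "nat \<Rightarrow> ('c \<Rightarrow> real) set" where
  "valuations k = {\<nu>. \<forall>c. 0 \<le> \<nu> c \<and> \<nu> c \<le> real k}"

datatype cmp = Lt | Gt | Eq | Le | Ge

fun cmp_sem :: "cmp \<Rightarrow> real \<Rightarrow> real \<Rightarrow> bool" where
  "cmp_sem Lt x y = (x < y)"
| "cmp_sem Gt x y = (x > y)"
| "cmp_sem Eq x y = (x = y)"
| "cmp_sem Le x y = (x \<le> y)"
| "cmp_sem Ge x y = (x \<ge> y)"

datatype 'c ccon = Single 'c cmp nat | Diff 'c 'c cmp nat

fun ccon_bound :: "'c ccon \<Rightarrow> nat" where
  "ccon_bound (Single c r i) = i"
| "ccon_bound (Diff c c' r i) = i"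

fun ccon_sat :: "('c \<Rightarrow> real) \<Rightarrow> 'c ccon \<Rightarrow> bool" where
  "ccon_sat \<nu> (Single c r i) = cmp_sem r (\<nu> c) (real i)"
| "ccon_sat \<nu> (Diff c c' r i) = cmp_sem r (\<nu> c - \<nu> c') (real i)"

definition clock_equiv :: "nat \<Rightarrow> ('c \<Rightarrow> real) \<Rightarrow> ('c \<Rightarrow> real) \<Rightarrow> bool" where
  "clock_equiv k \<nu> \<nu>' \<longleftrightarrow> (\<forall>\<phi>. ccon_bound \<phi> \<le> k \<longrightarrow> (ccon_sat \<nu> \<phi> \<longleftrightarrow> ccon_sat \<nu>' \<phi>))"

definition clock_regions :: "nat \<Rightarrow> ('c \<Rightarrow> real) set set" where
  "clock_regions k = valuations k // {(\<nu>,\<nu>'). \<nu> \<in> valuations k \<and> \<nu>' \<in> valuations k \<and> clock_equiv k \<nu> \<nu>'}"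

definition convex_val_set :: "('c \<Rightarrow> real) set \<Rightarrow> bool" where
  "convex_val_set W \<longleftrightarrow> (\<forall>x\<in>W. \<forall>y\<in>W. \<forall>u::real. 0 \<le> u \<and> u \<le> 1 \<longrightarrow> (\<lambda>c. (1 - u) * x c + u * y c) \<in> W)"

definition clock_zone :: "nat \<Rightarrow> ('c \<Rightarrow> real) set \<Rightarrow> bool" where
  "clock_zone k W \<longleftrightarrow> (\<exists>\<P>. \<P> \<subseteq> clock_regions k \<and> W = \<Union>\<P>) \<and> convex_val_set W"

definition is_zone :: "nat \<Rightarrow> ('l,'c) conf set \<Rightarrow> bool" where
  "is_zone k Z \<longleftrightarrow> (\<forall>l. clock_zone k {\<nu>. (l,\<nu>) \<in> Z})"

definition is_region :: "nat \<Rightarrow> ('l,'c) conf set \<Rightarrow> bool" where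
  "is_region k R \<longleftrightarrow> (\<exists>l P. P \<in> clock_regions k \<and> R = {l} \<times> P)"

definition reg_of :: "nat \<Rightarrow> ('l,'c) conf \<Rightarrow> ('l,'c) conf set" where
  "reg_of k s = {(fst s, \<nu>') | \<nu>'. \<nu>' \<in> valuations k \<and> clock_equiv k (snd s) \<nu>'}"

definition delay :: "('l,'c) conf \<Rightarrow> real \<Rightarrow> ('l,'c) conf" where
  "delay s t = (fst s, \<lambda>c. snd s c + t)"

definition reset :: "('c \<Rightarrow> real) \<Rightarrow> 'c set \<Rightarrow> ('c \<Rightarrow> real)" where
  "reset \<nu> X = (\<lambda>c. if c \<in> X then 0 else \<nu> c)"

record ('l,'c,'a) ta =
  St :: "('l,'c) conf set"
  Enab :: "'a \<Rightarrow> ('l,'c) conf set"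
  delta :: "'l \<Rightarrow> 'a \<Rightarrow> 'l"
  rho :: "'a \<Rightarrow> 'c set"
  Fin :: "('l,'c) conf set"

definition timed_automaton :: "nat \<Rightarrow> ('l,'c,'a) ta \<Rightarrow> bool" where
  "timed_automaton k \<T> \<longleftrightarrow>
     St \<T> \<subseteq> UNIV \<times> valuations k \<and> is_zone k (St \<T>) \<and>
     (\<forall>a. is_zone k (Enab \<T> a) \<and> Enab \<T> a \<subseteq> St \<T>) \<and>
     is_zone k (Fin \<T>) \<and> Fin \<T> \<subseteq> St \<T>"

definition delay_step :: "nat \<Rightarrow> ('l,'c,'a) ta \<Rightarrow> ('l,'c) conf \<Rightarrow> real \<Rightarrow> ('l,'c) conf \<Rightarrow> bool" where
  "delay_step k \<T> s t s' \<longleftrightarrow> 0 \<le> t \<and> snd (delay s t) \<in> valuations k \<and> s' = delay s t \<and>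
     (\<forall>t'. 0 \<le> t' \<and> t' \<le> t \<longrightarrow> delay s t' \<in> St \<T>)"

definition act_step :: "('l,'c,'a) ta \<Rightarrow> 'a \<Rightarrow> ('l,'c) conf \<Rightarrow> ('l,'c) conf \<Rightarrow> bool" where
  "act_step \<T> a s s' \<longleftrightarrow> s' = (delta \<T> (fst s) a, reset (snd s) (rho \<T> a)) \<and>
     s \<in> St \<T> \<and> s' \<in> St \<T> \<and> s \<in> Enab \<T> a"

definition Succ :: "('l,'c,'a) ta \<Rightarrow> ('l,'c) conf \<Rightarrow> 'a \<times> real \<Rightarrow> ('l,'c) conf" where
  "Succ \<T> s xt = (delta \<T> (fst s) (fst xt), reset (\<lambda>c. snd s c + snd xt) (rho \<T> (fst xt)))"

definition regions :: "nat \<Rightarrow> ('l,'c,'a) ta \<Rightarrow> ('l,'c) conf set set" where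
  "regions k \<T> = {R. is_region k R \<and> R \<subseteq> St \<T>}"

definition reg_delay :: "nat \<Rightarrow> ('l,'c,'a) ta \<Rightarrow> ('l,'c) conf set \<Rightarrow> ('l,'c) conf set \<Rightarrow> bool" where
  "reg_delay k \<T> R R' \<longleftrightarrow> (\<exists>s\<in>R. \<exists>s'\<in>R'. \<exists>t. delay_step k \<T> s t s')"

definition reg_succ :: "nat \<Rightarrow> ('l,'c,'a) ta \<Rightarrow> ('l,'c) conf set \<Rightarrow> ('l,'c) conf set \<Rightarrow> bool" where
  "reg_succ k \<T> R R' \<longleftrightarrow> reg_delay k \<T> R R' \<and> R \<noteq> R' \<and>
     (\<forall>R''. is_region k R'' \<and> reg_delay k \<T> R R'' \<and> reg_delay k \<T> R'' R' \<longrightarrow> R'' = R \<or> R'' = R')"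

definition reg_act :: "('l,'c,'a) ta \<Rightarrow> 'a \<Rightarrow> ('l,'c) conf set \<Rightarrow> ('l,'c) conf set \<Rightarrow> bool" where
  "reg_act \<T> a R R' \<longleftrightarrow> (\<exists>s\<in>R. \<exists>s'\<in>R'. act_step \<T> a s s')"

definition thin :: "nat \<Rightarrow> ('l,'c) conf set \<Rightarrow> bool" where
  "thin k R \<longleftrightarrow> (\<forall>s\<in>R. \<forall>\<epsilon>>0. snd (delay s \<epsilon>) \<in> valuations k \<longrightarrow> reg_of k (delay s \<epsilon>) \<noteq> reg_of k s)"

definition reg_bc :: "nat \<Rightarrow> ('l,'c,'a) ta \<Rightarrow> nat \<Rightarrow> 'c \<Rightarrow> ('l,'c) conf set \<Rightarrow> ('l,'c) conf set \<Rightarrow> bool" where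
  "reg_bc k \<T> b c R R'' \<longleftrightarrow> thin k R'' \<and> reg_delay k \<T> R R'' \<and>
     (\<forall>s\<in>R. delay s (real b - snd s c) \<in> R'')"

type_synonym ('a,'c) sta = "'a \<times> nat \<times> 'c"
type_synonym ('l,'c,'a) move = "('l,'c) conf set \<times> ('a,'c) sta \<times> ('l,'c) conf set"

definition sta_time :: "('l,'c) conf \<Rightarrow> ('a,'c) sta \<Rightarrow> real" where
  "sta_time s \<alpha> = (case \<alpha> of (a,b,c) \<Rightarrow> if snd s c \<le> real b then real b - snd s c else 0)"

definition Succ_sta :: "('l,'c,'a) ta \<Rightarrow> ('l,'c) conf \<Rightarrow> ('a,'c) sta \<Rightarrow> ('l,'c) conf" where
  "Succ_sta \<T> s \<alpha> = Succ \<T> s (fst \<alpha>, sta_time s \<alpha>)"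

definition Rmin :: "nat \<Rightarrow> ('l,'c,'a) ta \<Rightarrow> 'l set \<Rightarrow> ('l,'c) conf set set" where
  "Rmin k \<T> Lmin = {R \<in> regions k \<T>. \<forall>s\<in>R. fst s \<in> Lmin}"

definition Rmax :: "nat \<Rightarrow> ('l,'c,'a) ta \<Rightarrow> 'l set \<Rightarrow> ('l,'c) conf set set" where
  "Rmax k \<T> Lmin = {R \<in> regions k \<T>. \<forall>s\<in>R. fst s \<notin> Lmin}"

definition Smax :: "('l,'c,'a) ta \<Rightarrow> 'l set \<Rightarrow> ('l,'c) conf set" where
  "Smax \<T> Lmin = {s \<in> St \<T>. fst s \<notin> Lmin}"

definition region_moves :: "nat \<Rightarrow> ('l,'c,'a) ta \<Rightarrow> 'l set \<Rightarrow> ('l,'c,'a) move set" where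
  "region_moves k \<T> Lmin = {(R,(a,b,c),R') | R a b c R'.
     R \<in> regions k \<T> \<and> R' \<in> regions k \<T> \<and> b \<le> k \<and>
     ((\<exists>R''\<in>regions k \<T>. reg_bc k \<T> b c R R'' \<and> reg_act \<T> a R'' R') \<or>
      (R \<in> Rmin k \<T> Lmin \<and> (\<exists>R''\<in>regions k \<T>. \<exists>R'''\<in>regions k \<T>.
          reg_bc k \<T> b c R R'' \<and> reg_succ k \<T> R'' R''' \<and> reg_act \<T> a R''' R')) \<or>
      (R \<in> Rmax k \<T> Lmin \<and> (\<exists>R''\<in>regions k \<T>. \<exists>R'''\<in>regions k \<T>.
          reg_bc k \<T> b c R R'' \<and> reg_succ k \<T> R''' R'' \<and> reg_act \<T> a R''' R')))}"

text \<open>A graph G = (\<R>, M') is represented by its set of moves M', required to be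
  a subset of the moves of the timed region graph.\<close>
definition choiceless :: "('l,'c,'a) move set \<Rightarrow> ('l,'c) conf set \<Rightarrow> bool" where
  "choiceless G R \<longleftrightarrow> (\<exists>!m. m \<in> G \<and> fst m = R)"

definition max_strategy :: "nat \<Rightarrow> ('l,'c,'a) ta \<Rightarrow> 'l set \<Rightarrow> ('l,'c,'a) move set
    \<Rightarrow> (('l,'c) conf \<Rightarrow> ('l,'c,'a) move) \<Rightarrow> bool" where
  "max_strategy k \<T> Lmin G \<chi> \<longleftrightarrow> (\<forall>s\<in>Smax \<T> Lmin. \<chi> s \<in> G \<and> fst (\<chi> s) = reg_of k s)"

definition max_reg_const :: "nat \<Rightarrow> ('l,'c,'a) ta \<Rightarrow> 'l set \<Rightarrow> (('l,'c) conf \<Rightarrow> ('l,'c,'a) move) \<Rightarrow> bool" where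
  "max_reg_const k \<T> Lmin \<chi> \<longleftrightarrow>
     (\<forall>s\<in>Smax \<T> Lmin. \<forall>s'\<in>Smax \<T> Lmin. reg_of k s = reg_of k s' \<longrightarrow> \<chi> s = \<chi> s')"

definition restrict_max :: "nat \<Rightarrow> ('l,'c,'a) ta \<Rightarrow> 'l set \<Rightarrow> ('l,'c,'a) move set
    \<Rightarrow> (('l,'c) conf \<Rightarrow> ('l,'c,'a) move) \<Rightarrow> ('l,'c,'a) move set" where
  "restrict_max k \<T> Lmin G \<chi> = {m \<in> G. fst m \<in> Rmin k \<T> Lmin \<or>
      (fst m \<in> Rmax k \<T> Lmin \<and> (\<exists>s\<in>Smax \<T> Lmin. s \<in> fst m \<and> m = \<chi> s))}"

definition lex_le :: "('x::linorder \<times> 'y::linorder) \<Rightarrow> ('x \<times> 'y) \<Rightarrow> bool" where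
  "lex_le p q \<longleftrightarrow> fst p < fst q \<or> (fst p = fst q \<and> snd p \<le> snd q)"

definition oplus :: "('l,'c,'a) ta \<Rightarrow> (('l,'c) conf \<Rightarrow> ereal) \<Rightarrow> ('a,'c) sta \<Rightarrow> ('l,'c) conf \<Rightarrow> ereal" where
  "oplus \<T> F \<alpha> s = ereal (sta_time s \<alpha>) + F (Succ_sta \<T> s \<alpha>)"

definition boxplus :: "('l,'c,'a) ta \<Rightarrow> (('l,'c) conf \<Rightarrow> enat) \<Rightarrow> ('a,'c) sta \<Rightarrow> ('l,'c) conf \<Rightarrow> enat" where
  "boxplus \<T> F \<alpha> s = 1 + F (Succ_sta \<T> s \<alpha>)"

definition move_val :: "('l,'c,'a) ta \<Rightarrow> (('l,'c) conf set \<Rightarrow> ('l,'c) conf \<Rightarrow> ereal)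
    \<Rightarrow> (('l,'c) conf set \<Rightarrow> ('l,'c) conf \<Rightarrow> enat) \<Rightarrow> ('l,'c) conf \<Rightarrow> ('l,'c,'a) move \<Rightarrow> ereal \<times> enat" where
  "move_val \<T> T D s m = (case m of (R, \<alpha>, R') \<Rightarrow> (oplus \<T> (T R') \<alpha> s, boxplus \<T> (D R') \<alpha> s))"

definition Mstar :: "nat \<Rightarrow> ('l,'c,'a) ta \<Rightarrow> ('l,'c,'a) move set \<Rightarrow> (('l,'c) conf set \<Rightarrow> ('l,'c) conf \<Rightarrow> ereal)
    \<Rightarrow> (('l,'c) conf set \<Rightarrow> ('l,'c) conf \<Rightarrow> enat) \<Rightarrow> ('l,'c) conf \<Rightarrow> ('l,'c,'a) move set" where
  "Mstar k \<T> G T D s = {m \<in> G. fst m = reg_of k s \<and>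
     (\<forall>m'\<in>G. fst m' = reg_of k s \<longrightarrow> lex_le (move_val \<T> T D s m') (move_val \<T> T D s m))}"

definition Improve_max :: "(('l,'c,'a) move set \<Rightarrow> ('l,'c,'a) move) \<Rightarrow> nat \<Rightarrow> ('l,'c,'a) ta
    \<Rightarrow> ('l,'c,'a) move set \<Rightarrow> (('l,'c) conf \<Rightarrow> ('l,'c,'a) move)
    \<Rightarrow> (('l,'c) conf set \<Rightarrow> ('l,'c) conf \<Rightarrow> ereal) \<Rightarrow> (('l,'c) conf set \<Rightarrow> ('l,'c) conf \<Rightarrow> enat)
    \<Rightarrow> ('l,'c) conf \<Rightarrow> ('l,'c,'a) move" where
  "Improve_max Choose k \<T> G \<chi> T D s =
     (if \<chi> s \<in> Mstar k \<T> G T D s then \<chi> s else Choose (Mstar k \<T> G T D s))"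

definition is_lex_max :: "('x::linorder \<times> 'y::linorder) \<Rightarrow> ('x \<times> 'y) set \<Rightarrow> bool" where
  "is_lex_max x X \<longleftrightarrow> x \<in> X \<and> (\<forall>y\<in>X. lex_le y x)"

definition is_lex_min :: "('x::linorder \<times> 'y::linorder) \<Rightarrow> ('x \<times> 'y) set \<Rightarrow> bool" where
  "is_lex_min x X \<longleftrightarrow> x \<in> X \<and> (\<forall>y\<in>X. lex_le x y)"

definition move_vals :: "nat \<Rightarrow> ('l,'c,'a) ta \<Rightarrow> ('l,'c,'a) move set \<Rightarrow> (('l,'c) conf set \<Rightarrow> ('l,'c) conf \<Rightarrow> ereal)
    \<Rightarrow> (('l,'c) conf set \<Rightarrow> ('l,'c) conf \<Rightarrow> enat) \<Rightarrow> ('l,'c) conf \<Rightarrow> (ereal \<times> enat) set" where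
  "move_vals k \<T> G T D s = {move_val \<T> T D s m | m. m \<in> G \<and> fst m = reg_of k s}"

definition opt_max :: "nat \<Rightarrow> ('l,'c,'a) ta \<Rightarrow> ('l,'c,'a) move set \<Rightarrow> (('l,'c) conf set \<Rightarrow> ('l,'c) conf \<Rightarrow> ereal)
    \<Rightarrow> (('l,'c) conf set \<Rightarrow> ('l,'c) conf \<Rightarrow> enat) \<Rightarrow> bool" where
  "opt_max k \<T> G T D \<longleftrightarrow>
     (\<forall>s\<in>Fin \<T>. T (reg_of k s) s = 0 \<and> D (reg_of k s) s = 0) \<and>
     (\<forall>s\<in>St \<T> - Fin \<T>. is_lex_max (T (reg_of k s) s, D (reg_of k s) s) (move_vals k \<T> G T D s))"

definition opt_min :: "nat \<Rightarrow> ('l,'c,'a) ta \<Rightarrow> ('l,'c,'a) move set \<Rightarrow> (('l,'c) conf set \<Rightarrow> ('l,'c) conf \<Rightarrow> ereal)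
    \<Rightarrow> (('l,'c) conf set \<Rightarrow> ('l,'c) conf \<Rightarrow> enat) \<Rightarrow> bool" where
  "opt_min k \<T> G T D \<longleftrightarrow>
     (\<forall>s\<in>Fin \<T>. T (reg_of k s) s = 0 \<and> D (reg_of k s) s = 0) \<and>
     (\<forall>s\<in>St \<T> - Fin \<T>. is_lex_min (T (reg_of k s) s, D (reg_of k s) s) (move_vals k \<T> G T D s))"

text \<open>For a 0-player graph both equations coincide; Opt(G) is their conjunction.\<close>
definition opt0 :: "nat \<Rightarrow> ('l,'c,'a) ta \<Rightarrow> ('l,'c,'a) move set \<Rightarrow> (('l,'c) conf set \<Rightarrow> ('l,'c) conf \<Rightarrow> ereal)
    \<Rightarrow> (('l,'c) conf set \<Rightarrow> ('l,'c) conf \<Rightarrow> enat) \<Rightarrow> bool" where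
  "opt0 k \<T> G T D \<longleftrightarrow> opt_max k \<T> G T D \<and> opt_min k \<T> G T D"

end

theory Submission
  imports Defs
begin

lemma cmp_univ: "(UNIV :: cmp set) = {Lt,Gt,Eq,Le,Ge}"
  by (auto intro: cmp.exhaust)

lemma finite_Phi: "finite {\<phi> :: ('c::finite) ccon. ccon_bound \<phi> \<le> k}"
proof -
  have "{\<phi> :: 'c ccon. ccon_bound \<phi> \<le> k} \<subseteq>
     (\<lambda>(c,r,i). Single c r i) ` (UNIV \<times> UNIV \<times> {..k}) \<union>
     (\<lambda>(c,c',r,i). Diff c c' r i) ` (UNIV \<times> UNIV \<times> UNIV \<times> {..k})"
  proof
    fix \<phi> :: "'c ccon" assume "\<phi> \<in> {\<phi>. ccon_bound \<phi> \<le> k}"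
    then show "\<phi> \<in> (\<lambda>(c,r,i). Single c r i) ` (UNIV \<times> UNIV \<times> {..k}) \<union>
     (\<lambda>(c,c',r,i). Diff c c' r i) ` (UNIV \<times> UNIV \<times> UNIV \<times> {..k})"
      by (cases \<phi>) force+
  qed
  moreover have "finite (UNIV :: cmp set)" by (simp add: cmp_univ)
  ultimately show ?thesis
    by (meson finite_Un finite_SigmaI finite_atMost finite_imageI finite_subset finite_UNIV)
qed

definition sig :: "nat \<Rightarrow> ('c \<Rightarrow> real) \<Rightarrow> 'c ccon set" where
  "sig k \<nu> = {\<phi>. ccon_bound \<phi> \<le> k \<and> ccon_sat \<nu> \<phi>}"

lemma clock_equiv_sig: "clock_equiv k \<nu> \<nu>' \<longleftrightarrow> sig k \<nu> = sig k \<nu>'"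
  unfolding clock_equiv_def sig_def by blast

lemma finite_clock_regions: "finite (clock_regions k :: ('c::finite \<Rightarrow> real) set set)"
proof -
  have "clock_regions k \<subseteq> (\<lambda>S. {\<nu>'\<in>valuations k. sig k \<nu>' = S}) ` Pow {\<phi> :: 'c ccon. ccon_bound \<phi> \<le> k}"
  proof
    fix X :: "('c \<Rightarrow> real) set" assume "X \<in> clock_regions k"
    then obtain \<nu> where nu: "\<nu> \<in> valuations k"
      and X: "X = {(\<nu>,\<nu>'). \<nu> \<in> valuations k \<and> \<nu>' \<in> valuations k \<and> clock_equiv k \<nu> \<nu>'} `` {\<nu>}"
      unfolding clock_regions_def quotient_def by blast
    have "X = {\<nu>'\<in>valuations k. sig k \<nu>' = sig k \<nu>}"
      using X nu by (auto simp: clock_equiv_sig)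
    moreover have "sig k \<nu> \<in> Pow {\<phi> :: 'c ccon. ccon_bound \<phi> \<le> k}" by (auto simp: sig_def)
    ultimately show "X \<in> (\<lambda>S. {\<nu>'\<in>valuations k. sig k \<nu>' = S}) ` Pow {\<phi> :: 'c ccon. ccon_bound \<phi> \<le> k}"
      by blast
  qed
  moreover have "finite (Pow {\<phi> :: 'c ccon. ccon_bound \<phi> \<le> k})" using finite_Phi by simp
  ultimately show ?thesis using finite_subset by blast
qed

lemma finite_regions: "finite (regions k (\<T> :: ('l::finite,'c::finite,'a) ta))"
proof -
  have "regions k \<T> \<subseteq> (\<lambda>(l,P). {l} \<times> P) ` (UNIV \<times> clock_regions k)"
    unfolding regions_def is_region_def by force
  then show ?thesis using finite_clock_regions
    by (meson finite_SigmaI finite_UNIV finite_imageI finite_subset)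
qed

lemma lex_max_exists:
  fixes X :: "('x::linorder \<times> 'y::linorder) set"
  assumes "finite X" "X \<noteq> {}"
  shows "\<exists>x\<in>X. \<forall>y\<in>X. lex_le y x"
  using assms
proof (induction X rule: finite_ne_induct)
  case (singleton x) then show ?case by (auto simp: lex_le_def)
next
  case (insert a F)
  then obtain x where x: "x \<in> F" "\<forall>y\<in>F. lex_le y x" by blast
  show ?case
  proof (cases "lex_le a x")
    case True then show ?thesis using x by auto
  next
    case False
    then have "lex_le x a" by (auto simp: lex_le_def)
    moreover have "\<forall>y\<in>F. lex_le y a" using x \<open>lex_le x a\<close>
      by (auto simp: lex_le_def)
    ultimately show ?thesis by (auto simp: lex_le_def)
  qed
qed

lemma ex1_two: "\<exists>!y. P y \<Longrightarrow> P a \<Longrightarrow> P b \<Longrightarrow> a = b"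
  for P :: "'x \<Rightarrow> bool"
  by blast

theorem mainTheorem11:
  fixes k :: nat
    and \<T> :: "('l::finite, 'c::finite, 'a::finite) ta"
    and Lmin :: "'l set"
    and G :: "('l,'c,'a) move set"
    and \<chi> :: "('l,'c) conf \<Rightarrow> ('l,'c,'a) move"
    and T :: "('l,'c) conf set \<Rightarrow> ('l,'c) conf \<Rightarrow> ereal"
    and D :: "('l,'c) conf set \<Rightarrow> ('l,'c) conf \<Rightarrow> enat"
    and Choose :: "('l,'c,'a) move set \<Rightarrow> ('l,'c,'a) move"
  assumes TA: "timed_automaton k \<T>"
    and G_sub: "G \<subseteq> region_moves k \<T> Lmin"
    and min_choiceless: "\<forall>R\<in>Rmin k \<T> Lmin. choiceless G R"
    and chi_strat: "max_strategy k \<T> Lmin G \<chi>"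
    and chi_const: "max_reg_const k \<T> Lmin \<chi>"
    and T_range: "\<forall>R s. T R s \<noteq> -\<infinity>"
    and opt_chi: "opt0 k \<T> (restrict_max k \<T> Lmin G \<chi>) T D"
    and Choose: "\<forall>X. X \<noteq> {} \<longrightarrow> Choose X \<in> X"
    and improve_fix: "\<forall>s\<in>Smax \<T> Lmin. Improve_max Choose k \<T> G \<chi> T D s = \<chi> s"
  shows "opt_max k \<T> G T D"
proof -
  let ?H = "restrict_max k \<T> Lmin G \<chi>"
  have om: "opt_max k \<T> ?H T D" using opt_chi by (simp add: opt0_def)
  have sval: "s \<in> reg_of k s" if "s \<in> St \<T>" for s
  proof -
    have "snd s \<in> valuations k" using that TA unfolding timed_automaton_def by auto
    then show ?thesis unfolding reg_of_def clock_equiv_def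
      by (cases s) auto
  qed
  have main: "is_lex_max (T (reg_of k s) s, D (reg_of k s) s) (move_vals k \<T> G T D s)"
    if s: "s \<in> St \<T> - Fin \<T>" for s
  proof -
    let ?x = "(T (reg_of k s) s, D (reg_of k s) s)"
    have "is_lex_max ?x (move_vals k \<T> ?H T D s)" using om s unfolding opt_max_def by blast
    then obtain m where m: "m \<in> ?H" "fst m = reg_of k s" and xm: "?x = move_val \<T> T D s m"
      unfolding is_lex_max_def move_vals_def by blast
    have sin: "s \<in> reg_of k s" using sval s by blast
    show ?thesis
    proof (cases "fst s \<in> Lmin")
      case True
      have "fst m \<in> Rmin k \<T> Lmin"
        using m sin True unfolding restrict_max_def Rmax_def by auto
      then have "choiceless G (reg_of k s)" using min_choiceless m by auto
      have mG: "m \<in> G" using m unfolding restrict_max_def by blast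
      have uniq: "m' = m" if "m' \<in> G" "fst m' = reg_of k s" for m'
      proof -
        from \<open>choiceless G (reg_of k s)\<close> have
          ex: "\<exists>y. (y \<in> G \<and> fst y = reg_of k s) \<and> (\<forall>z. z \<in> G \<and> fst z = reg_of k s \<longrightarrow> z = y)"
          unfolding choiceless_def Ex1_def .
        then obtain y where y: "\<forall>z. z \<in> G \<and> fst z = reg_of k s \<longrightarrow> z = y" by (elim exE conjE)
        have e1: "m' = y" using spec[OF y, of m'] that by (intro mp[of _ "m' = y"]) (assumption, intro conjI)
        have e2: "m = y" using spec[OF y, of m] mG m(2) by (intro mp[of _ "m = y"]) (assumption, intro conjI)
        show ?thesis using e1 e2 by (rule trans[OF _ sym])
      qed
      have "move_vals k \<T> G T D s = {?x}"
      proof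
        show "move_vals k \<T> G T D s \<subseteq> {?x}"
        proof
          fix y assume "y \<in> move_vals k \<T> G T D s"
          then obtain m' where "m' \<in> G" "fst m' = reg_of k s" "y = move_val \<T> T D s m'"
            unfolding move_vals_def by blast
          then have "m' = m" using uniq by blast
          then show "y \<in> {?x}" using xm \<open>y = _\<close> by simp
        qed
        have "?x \<in> move_vals k \<T> G T D s" unfolding move_vals_def
          using mG m(2) xm by (intro CollectI exI[of _ m]) simp
        then show "{?x} \<subseteq> move_vals k \<T> G T D s" by simp
      qed
      then show ?thesis by (simp add: is_lex_max_def lex_le_def)
    next
      case False
      then have sS: "s \<in> Smax \<T> Lmin" using s by (simp add: Smax_def)
      have "fst m \<notin> Rmin k \<T> Lmin" using m(2) sin False unfolding Rmin_def by blast
      then obtain s' where s': "s' \<in> Smax \<T> Lmin" "s' \<in> fst m" "m = \<chi> s'"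
        using m(1) unfolding restrict_max_def by blast
      have "fst (\<chi> s') = reg_of k s'" using chi_strat s'(1) unfolding max_strategy_def by blast
      then have "reg_of k s' = reg_of k s" using m(2) s'(3) by simp
      then have "\<chi> s' = \<chi> s" using chi_const s'(1) sS unfolding max_reg_const_def by blast
      then have mchi: "m = \<chi> s" using s'(3) by simp
      have chiG: "\<chi> s \<in> G" "fst (\<chi> s) = reg_of k s" using chi_strat sS unfolding max_strategy_def by blast+
      have "{m' \<in> G. fst m' = reg_of k s} \<subseteq> {reg_of k s} \<times> ((UNIV::'a set) \<times> {..k} \<times> (UNIV::'c set)) \<times> regions k \<T>"
        using G_sub unfolding region_moves_def by auto
      moreover have "finite ({reg_of k s} \<times> ((UNIV::'a set) \<times> {..k} \<times> (UNIV::'c set)) \<times> regions k \<T>)"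
        using finite_regions by (intro finite_SigmaI) auto
      ultimately have finM: "finite {m' \<in> G. fst m' = reg_of k s}" by (rule finite_subset)
      have "move_vals k \<T> G T D s = move_val \<T> T D s ` {m' \<in> G. fst m' = reg_of k s}"
        unfolding move_vals_def by blast
      then have finV: "finite (move_vals k \<T> G T D s)" using finM by simp
      have "move_val \<T> T D s (\<chi> s) \<in> move_vals k \<T> G T D s" using chiG unfolding move_vals_def by blast
      then have neV: "move_vals k \<T> G T D s \<noteq> {}" by blast
      obtain v where v: "v \<in> move_vals k \<T> G T D s" "\<forall>y\<in>move_vals k \<T> G T D s. lex_le y v"
        using lex_max_exists[OF finV neV] by blast
      then obtain mm where mm: "mm \<in> G" "fst mm = reg_of k s" "v = move_val \<T> T D s mm"
        unfolding move_vals_def by blast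
      have "\<forall>m'\<in>G. fst m' = reg_of k s \<longrightarrow> lex_le (move_val \<T> T D s m') (move_val \<T> T D s mm)"
      proof (intro ballI impI)
        fix m' assume "m' \<in> G" "fst m' = reg_of k s"
        then have "move_val \<T> T D s m' \<in> move_vals k \<T> G T D s" unfolding move_vals_def by blast
        then show "lex_le (move_val \<T> T D s m') (move_val \<T> T D s mm)" using v(2) mm(3) by simp
      qed
      then have "mm \<in> Mstar k \<T> G T D s"
        using mm(1,2) unfolding Mstar_def by blast
      then have neM: "Mstar k \<T> G T D s \<noteq> {}" by blast
      have "\<chi> s \<in> Mstar k \<T> G T D s"
      proof (rule ccontr)
        assume "\<chi> s \<notin> Mstar k \<T> G T D s"
        then have "Improve_max Choose k \<T> G \<chi> T D s = Choose (Mstar k \<T> G T D s)"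
          unfolding Improve_max_def by simp
        then have "\<chi> s = Choose (Mstar k \<T> G T D s)" using improve_fix sS by simp
        then show False using Choose neM \<open>\<chi> s \<notin> _\<close> by metis
      qed
      then have allle: "\<forall>m'\<in>G. fst m' = reg_of k s \<longrightarrow> lex_le (move_val \<T> T D s m') ?x"
        using xm mchi unfolding Mstar_def by simp
      have "\<forall>y\<in>move_vals k \<T> G T D s. lex_le y ?x"
      proof
        fix y assume "y \<in> move_vals k \<T> G T D s"
        then obtain m' where "m' \<in> G" "fst m' = reg_of k s" "y = move_val \<T> T D s m'"
          unfolding move_vals_def by blast
        then show "lex_le y ?x" using allle by simp
      qed
      moreover have "?x \<in> move_vals k \<T> G T D s"
        using xm mchi chiG unfolding move_vals_def by blast
      ultimately show ?thesis unfolding is_lex_max_def by blast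
    qed
  qed
  show ?thesis
    using om main unfolding opt_max_def by blast
qed

end
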